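(* Let $\theta>0$. The following continuous embeddings hold: (a) If $1\le q_1<q_2<\infty$ and $1\le p<\infty$, then $l^{q_1),\frac{q_1}{q_2}\theta}(L^p)\hookrightarrow l^{q_2),\theta}(L^p)$. (b) If $0<\theta_1\le\theta_2$ and $1\le p,q<\infty$, then $l^{q),\theta_1}(L^p)\hookrightarrow l^{q),\theta_2}(L^p)$. (c) If $0<\theta_1\le\theta_2$, $1\le p_2<p_1<\infty$ and $1\le q<\infty$, then $l^{q),\theta_1}(L^{p_1})\hookrightarrow l^{q),\theta_2}(L^{p_2})$. (d) If $1\le p<\infty$ and $1\le q<\infty$, then $l^q(L^p)\hookrightarrow l^{q),\theta}(L^p)$. (e) If $1\le p,q<\infty$, $\delta>0$ and $0<\sigma<\frac1{q'}$, where $\frac1q+\frac1{q'}=1$, then $l^{q(1-\sigma)}(L^p)\hookrightarrow l^{q),\theta}(L^p)\hookrightarrow l^{q(1+\delta)}(L^p)$.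
   Context: Let $X$ be one of $\mathbb N,\mathbb N_0,\mathbb Z$ and $I_k=[k,k+1)$ for $k\in X$. For $1\le r<\infty$, $1\le p<\infty$, the amalgam space $l^r(L^p)$ consists of measurable $g$ on $\bigcup_{k\in X}I_k$ with $\|g\|_{l^{r}(L^p)}:=\Big(\sum_{k\in X}\Big(\int_{I_k}|g|^p\,dx\Big)^{r/p}\Big)^{1/r}<\infty$. For $\theta>0$, the grand amalgam Lebesgue function space $l^{q),\theta}(L^p)$ consists of complex-valued measurable $g$ on $\bigcup_{k\in X}I_k$ with $g\chi_{I_k}\in L^p$ for all $k$ and $\|g\|_{p,q),\theta}:=\sup_{\varepsilon>0}\varepsilon^{\frac{\theta}{q(1+\varepsilon)}}\|g\|_{l^{q(1+\varepsilon)}(L^p)}<\infty$. An embedding $A\hookrightarrow B$ means $A\subset B$ and $\|g\|_B\le c\|g\|_A$ for some constant $c>0$ and all $g\in A$. *)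

theory Defs
  imports "HOL-Analysis.Analysis"
begin

definition admissible_index :: "int set \<Rightarrow> bool" where
  "admissible_index X \<longleftrightarrow> X = {1..} \<or> X = {0..} \<or> X = UNIV"

definition unit_int :: "int \<Rightarrow> real set" where
  "unit_int k = {real_of_int k ..< real_of_int k + 1}"

definition amalg_dom :: "int set \<Rightarrow> real set" where
  "amalg_dom X = (\<Union>k\<in>X. unit_int k)"

definition loc_int :: "real \<Rightarrow> (real \<Rightarrow> complex) \<Rightarrow> int \<Rightarrow> ennreal" where
  "loc_int p g k = (\<integral>\<^sup>+ x\<in>unit_int k. ennreal (norm (g x) powr p) \<partial>lebesgue)"

definition loc_norm :: "real \<Rightarrow> (real \<Rightarrow> complex) \<Rightarrow> int \<Rightarrow> real" where
  "loc_norm p g k = enn2real (loc_int p g k) powr (1 / p)"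

definition loc_Lp :: "int set \<Rightarrow> real \<Rightarrow> (real \<Rightarrow> complex) \<Rightarrow> bool" where
  "loc_Lp X p g \<longleftrightarrow> set_borel_measurable lebesgue (amalg_dom X) g
      \<and> (\<forall>k\<in>X. loc_int p g k < \<infinity>)"

definition amalgam :: "int set \<Rightarrow> real \<Rightarrow> real \<Rightarrow> (real \<Rightarrow> complex) set" where
  "amalgam X r p = {g. loc_Lp X p g \<and> (\<lambda>k. loc_norm p g k powr r) summable_on X}"

definition amalgam_norm :: "int set \<Rightarrow> real \<Rightarrow> real \<Rightarrow> (real \<Rightarrow> complex) \<Rightarrow> real" where
  "amalgam_norm X r p g = (\<Sum>\<^sub>\<infinity>k\<in>X. loc_norm p g k powr r) powr (1 / r)"

definition grand_amalgam :: "int set \<Rightarrow> real \<Rightarrow> real \<Rightarrow> real \<Rightarrow> (real \<Rightarrow> complex) set" where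
  "grand_amalgam X q \<theta> p = {g. loc_Lp X p g
      \<and> (\<forall>\<epsilon>>0. g \<in> amalgam X (q * (1 + \<epsilon>)) p)
      \<and> bdd_above ((\<lambda>\<epsilon>. \<epsilon> powr (\<theta> / (q * (1 + \<epsilon>))) * amalgam_norm X (q * (1 + \<epsilon>)) p g) ` {0<..})}"

definition grand_amalgam_norm :: "int set \<Rightarrow> real \<Rightarrow> real \<Rightarrow> real \<Rightarrow> (real \<Rightarrow> complex) \<Rightarrow> real" where
  "grand_amalgam_norm X q \<theta> p g =
     (SUP \<epsilon>\<in>{0<..}. \<epsilon> powr (\<theta> / (q * (1 + \<epsilon>))) * amalgam_norm X (q * (1 + \<epsilon>)) p g)"

definition embeds :: "'a set \<Rightarrow> ('a \<Rightarrow> real) \<Rightarrow> 'a set \<Rightarrow> ('a \<Rightarrow> real) \<Rightarrow> bool" where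
  "embeds A nA B nB \<longleftrightarrow> A \<subseteq> B \<and> (\<exists>c>0. \<forall>g\<in>A. nB g \<le> c * nA g)"

end

theory Submission
  imports Defs
begin

lemma single_le_infsum:
  fixes f :: "int \<Rightarrow> real"
  assumes "f summable_on X" "\<And>k. k \<in> X \<Longrightarrow> f k \<ge> 0" "k \<in> X"
  shows "f k \<le> infsum f X"
proof -
  have "infsum f {k} \<le> infsum f X"
    by (rule infsum_mono_neutral) (use assms in auto)
  then show ?thesis by simp
qed

lemma lr_mono:
  fixes a :: "int \<Rightarrow> real"
  assumes nn: "\<And>k. k \<in> X \<Longrightarrow> a k \<ge> 0" and r: "0 < r" "r \<le> s"
    and sm: "(\<lambda>k. a k powr r) summable_on X"
  shows "(\<lambda>k. a k powr s) summable_on X \<and>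
    (infsum (\<lambda>k. a k powr s) X) powr (1/s) \<le> (infsum (\<lambda>k. a k powr r) X) powr (1/r)"
proof -
  define S where "S = infsum (\<lambda>k. a k powr r) X"
  define N where "N = S powr (1/r)"
  have S0: "S \<ge> 0" unfolding S_def by (rule infsum_nonneg) auto
  have N0: "N \<ge> 0" unfolding N_def by simp
  have SN: "S = N powr r" unfolding N_def using S0 r by (simp add: powr_powr)
  have aN: "a k \<le> N" if "k \<in> X" for k
  proof -
    have "a k powr r \<le> S" unfolding S_def
      by (rule single_le_infsum[OF sm]) (use that in auto)
    hence "(a k powr r) powr (1/r) \<le> S powr (1/r)"
      by (intro powr_mono2) (use r in auto)
    thus ?thesis using nn[OF that] r by (simp add: powr_powr N_def)
  qed
  have bd: "a k powr s \<le> N powr (s - r) * a k powr r" if "k \<in> X" for k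
  proof -
    have "a k powr s = a k powr (s - r) * a k powr r" by (simp flip: powr_add)
    also have "\<dots> \<le> N powr (s - r) * a k powr r"
      by (intro mult_right_mono powr_mono2) (use r nn[OF that] aN[OF that] in auto)
    finally show ?thesis .
  qed
  have sm2: "(\<lambda>k. N powr (s - r) * a k powr r) summable_on X"
    using sm by (rule summable_on_cmult_right)
  have sms: "(\<lambda>k. a k powr s) summable_on X"
    by (rule summable_on_comparison_test[OF sm2]) (use bd in auto)
  have "infsum (\<lambda>k. a k powr s) X \<le> infsum (\<lambda>k. N powr (s - r) * a k powr r) X"
    by (rule infsum_mono[OF sms sm2]) (use bd in auto)
  also have "\<dots> = N powr (s - r) * S" unfolding S_def by (rule infsum_cmult_right) (use sm in auto)
  also have "\<dots> = N powr s" by (simp add: SN flip: powr_add)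
  finally have "infsum (\<lambda>k. a k powr s) X \<le> N powr s" .
  hence "(infsum (\<lambda>k. a k powr s) X) powr (1/s) \<le> (N powr s) powr (1/s)"
    by (intro powr_mono2) (use r in \<open>auto intro!: infsum_nonneg\<close>)
  also have "\<dots> = N" using N0 r by (simp add: powr_powr)
  finally show ?thesis using sms by (simp add: N_def S_def)
qed

lemma lr_comp:
  fixes a b :: "int \<Rightarrow> real"
  assumes nn: "\<And>k. k \<in> X \<Longrightarrow> 0 \<le> a k" "\<And>k. k \<in> X \<Longrightarrow> a k \<le> b k" and r: "0 < r"
    and sm: "(\<lambda>k. b k powr r) summable_on X"
  shows "(\<lambda>k. a k powr r) summable_on X \<and>
    (infsum (\<lambda>k. a k powr r) X) powr (1/r) \<le> (infsum (\<lambda>k. b k powr r) X) powr (1/r)"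
proof -
  have le: "a k powr r \<le> b k powr r" if "k \<in> X" for k
    by (intro powr_mono2) (use r nn that in auto)
  have sma: "(\<lambda>k. a k powr r) summable_on X"
    by (rule summable_on_comparison_test[OF sm]) (use le in auto)
  have "infsum (\<lambda>k. a k powr r) X \<le> infsum (\<lambda>k. b k powr r) X"
    by (rule infsum_mono[OF sma sm]) (use le in auto)
  hence "(infsum (\<lambda>k. a k powr r) X) powr (1/r) \<le> (infsum (\<lambda>k. b k powr r) X) powr (1/r)"
    by (intro powr_mono2) (use r in \<open>auto intro!: infsum_nonneg\<close>)
  thus ?thesis using sma by simp
qed

lemma eps_bound:
  fixes \<epsilon> c q :: real
  assumes "\<epsilon> > 0" "c \<ge> 0" "q > 0"
  shows "\<epsilon> powr (c / (q * (1 + \<epsilon>))) \<le> exp (c / q)"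
proof -
  have "ln \<epsilon> \<le> \<epsilon> - 1" using assms ln_le_minus_one by auto
  hence "ln \<epsilon> / (1 + \<epsilon>) \<le> 1" using assms by (simp add: divide_le_eq)
  hence "(c/q) * (ln \<epsilon> / (1 + \<epsilon>)) \<le> (c/q) * 1"
    by (intro mult_left_mono) (use assms in auto)
  hence "c / (q * (1 + \<epsilon>)) * ln \<epsilon> \<le> c / q" by (simp add: field_simps)
  thus ?thesis using assms by (simp add: powr_def)
qed

lemma sup_transfer:
  fixes F G :: "real \<Rightarrow> real"
  assumes bdd: "bdd_above (F ` {0<..})" and le: "\<And>e. e > 0 \<Longrightarrow> G e \<le> C * F (h e)"
    and h: "\<And>e. e > 0 \<Longrightarrow> h e > 0" and C: "C \<ge> 0"
  shows "bdd_above (G ` {0<..}) \<and> (SUP e\<in>{0<..}. G e) \<le> C * (SUP e\<in>{0<..}. F e)"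
proof -
  have b: "G e \<le> C * (SUP e\<in>{0<..}. F e)" if "e > 0" for e
  proof -
    have "F (h e) \<le> (SUP e\<in>{0<..}. F e)" by (rule cSUP_upper[OF _ bdd]) (use h that in auto)
    hence "C * F (h e) \<le> C * (SUP e\<in>{0<..}. F e)" using C by (rule mult_left_mono)
    thus ?thesis using le[OF that] by linarith
  qed
  have "bdd_above (G ` {0<..})" using b by (auto intro!: bdd_aboveI2)
  moreover have "(SUP e\<in>{0<..}. G e) \<le> C * (SUP e\<in>{0<..}. F e)"
    by (rule cSUP_least) (use b in auto)
  ultimately show ?thesis by blast
qed



lemma unit_meas: "emeasure lebesgue (unit_int k) = 1"
  unfolding unit_int_def by (simp add: emeasure_completion)

lemma pow_ineq:
  fixes u l t :: real
  assumes "0 \<le> u" "0 < l" "0 < t" "t < 1"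
  shows "u powr t \<le> t * l powr (t - 1) * u + (1 - t) * l powr t"
proof (cases "u = 0")
  case True then show ?thesis using assms by simp
next
  case False
  have "(u / l) powr t * 1 powr (1 - t) \<le> t * (u / l) + (1 - t) * 1"
    by (rule Youngs_inequality_0) (use assms False in auto)
  hence "(u / l) powr t \<le> t * (u / l) + (1 - t)" by simp
  hence "l powr t * (u / l) powr t \<le> l powr t * (t * (u / l) + (1 - t))"
    by (rule mult_left_mono) simp
  moreover have "l powr t * (u / l) powr t = u powr t"
    using assms by (simp add: powr_divide)
  moreover have "l powr t * (t * (u / l) + (1 - t)) = t * l powr (t - 1) * u + (1 - t) * l powr t"
    using assms by (simp add: powr_diff field_simps)
  ultimately show ?thesis by simp
qed



lemma loc_le:
  assumes meas: "set_borel_measurable lebesgue (unit_int k) g"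
    and p: "0 < p2" "p2 < p1" and fin: "loc_int p1 g k < \<infinity>"
  shows "loc_int p2 g k < \<infinity> \<and> loc_norm p2 g k \<le> loc_norm p1 g k"
proof -
  define I where "I = unit_int k"
  define t where "t = p2 / p1"
  define a where "a = enn2real (loc_int p1 g k)"
  have t: "0 < t" "t < 1" using p by (auto simp: t_def)
  have a0: "a \<ge> 0" by (simp add: a_def)
  have A: "loc_int p1 g k = ennreal a" using fin by (simp add: a_def)
  have hm: "(\<lambda>x. ennreal (norm (g x) powr p1) * indicator I x) \<in> borel_measurable lebesgue"
  proof -
    have "(\<lambda>x. indicator I x *\<^sub>R g x) \<in> borel_measurable lebesgue"
      using meas by (simp add: set_borel_measurable_def I_def)
    hence "(\<lambda>x. ennreal (norm (indicator I x *\<^sub>R g x) powr p1)) \<in> borel_measurable lebesgue"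
      by measurable
    moreover have "(\<lambda>x. ennreal (norm (indicator I x *\<^sub>R g x) powr p1)) =
        (\<lambda>x. ennreal (norm (g x) powr p1) * indicator I x)"
      using p by (auto simp: indicator_def fun_eq_iff)
    ultimately show ?thesis by metis
  qed
  have Im: "I \<in> sets lebesgue" unfolding I_def unit_int_def by simp
  have key: "loc_int p2 g k \<le> ennreal (t * l powr (t - 1) * a + (1 - t) * l powr t)"
    if l: "l > 0" for l
  proof -
    have "loc_int p2 g k = (\<integral>\<^sup>+x. ennreal (norm (g x) powr p2) * indicator I x \<partial>lebesgue)"
      by (simp add: loc_int_def I_def)
    also have "\<dots> \<le> (\<integral>\<^sup>+x. ennreal (t * l powr (t - 1)) * (ennreal (norm (g x) powr p1) * indicator I x)
        + ennreal ((1 - t) * l powr t) * indicator I x \<partial>lebesgue)"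
    proof (rule nn_integral_mono)
      fix x
      have "norm (g x) powr p2 = (norm (g x) powr p1) powr t"
        using p by (simp add: powr_powr t_def)
      also have "\<dots> \<le> t * l powr (t - 1) * (norm (g x) powr p1) + (1 - t) * l powr t"
        by (rule pow_ineq) (use t l in auto)
      finally have "norm (g x) powr p2 \<le> t * l powr (t - 1) * (norm (g x) powr p1) + (1 - t) * l powr t" .
      hence "ennreal (norm (g x) powr p2) \<le> ennreal (t * l powr (t - 1)) * ennreal (norm (g x) powr p1) + ennreal ((1 - t) * l powr t)"
        using t l by (simp add: ennreal_mult[symmetric] ennreal_plus[symmetric] del: ennreal_plus)
      then show "ennreal (norm (g x) powr p2) * indicator I x \<le> ennreal (t * l powr (t - 1)) * (ennreal (norm (g x) powr p1) * indicator I x)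
        + ennreal ((1 - t) * l powr t) * indicator I x"
        by (auto simp: indicator_def)
    qed
    also have "\<dots> = ennreal (t * l powr (t - 1)) * (\<integral>\<^sup>+x. ennreal (norm (g x) powr p1) * indicator I x \<partial>lebesgue)
        + ennreal ((1 - t) * l powr t) * emeasure lebesgue I"
      using hm Im by (simp add: nn_integral_add nn_integral_cmult)
    also have "\<dots> = ennreal (t * l powr (t - 1)) * ennreal a + ennreal ((1 - t) * l powr t)"
      using A by (simp add: loc_int_def I_def unit_meas)
    also have "\<dots> = ennreal (t * l powr (t - 1) * a + (1 - t) * l powr t)"
      using t l a0 by (simp add: ennreal_mult[symmetric] ennreal_plus[symmetric] del: ennreal_plus)
    finally show ?thesis .
  qed
  have finite2: "loc_int p2 g k < \<infinity>"
    using key[of 1] by (simp add: order_le_less_trans)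
  define b where "b = enn2real (loc_int p2 g k)"
  have b0: "b \<ge> 0" by (simp add: b_def)
  have bkey: "b \<le> t * l powr (t - 1) * a + (1 - t) * l powr t" if "l > 0" for l
  proof -
    have "0 \<le> t * l powr (t - 1) * a + (1 - t) * l powr t" using t a0 by simp
    thus ?thesis using key[OF that] finite2 unfolding b_def
      by (intro enn2real_leI)
  qed
  have bat: "b \<le> a powr t"
  proof (cases "a = 0")
    case False
    hence "a > 0" using a0 by simp
    have "b \<le> t * a powr (t - 1) * a + (1 - t) * a powr t" using bkey[OF \<open>a > 0\<close>] .
    also have "t * a powr (t - 1) * a = t * a powr t"
      using \<open>a > 0\<close> by (simp add: powr_diff)
    finally show ?thesis by (simp add: algebra_simps)
  next
    case True
    show ?thesis
    proof (rule ccontr)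
      assume "\<not> b \<le> a powr t"
      hence bp: "b > 0" using True by simp
      define l where "l = (b / (2 * (1 - t))) powr (1 / t)"
      have l0: "l > 0" using bp t by (simp add: l_def)
      have "l powr t = b / (2 * (1 - t))" using bp t by (simp add: l_def powr_powr)
      hence "(1 - t) * l powr t = b / 2" using t by (simp add: field_simps)
      thus False using bkey[OF l0] True bp by simp
    qed
  qed
  have "loc_norm p2 g k = b powr (1 / p2)" by (simp add: loc_norm_def b_def)
  also have "\<dots> \<le> (a powr t) powr (1 / p2)" by (rule powr_mono2) (use p b0 bat in auto)
  also have "\<dots> = a powr (1 / p1)" using a0 p by (simp add: powr_powr t_def)
  also have "\<dots> = loc_norm p1 g k" by (simp add: loc_norm_def a_def)
  finally show ?thesis using finite2 by simp
qed



lemma loc_norm_nn: "loc_norm p g k \<ge> 0" by (simp add: loc_norm_def)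
lemma amalgam_norm_nn: "amalgam_norm X r p g \<ge> 0" by (simp add: amalgam_norm_def)

lemma amal_mono:
  assumes "g \<in> amalgam X r p" "0 < r" "r \<le> s"
  shows "g \<in> amalgam X s p \<and> amalgam_norm X s p g \<le> amalgam_norm X r p g"
  using lr_mono[of X "loc_norm p g" r s] assms loc_norm_nn
  by (auto simp: amalgam_def amalgam_norm_def)

lemma loc_Lp_p:
  assumes "loc_Lp X p1 g" "0 < p2" "p2 < p1"
  shows "loc_Lp X p2 g \<and> (\<forall>k\<in>X. loc_norm p2 g k \<le> loc_norm p1 g k)"
proof -
  have m: "set_borel_measurable lebesgue (amalg_dom X) g" using assms by (simp add: loc_Lp_def)
  have r: "loc_int p2 g k < \<infinity> \<and> loc_norm p2 g k \<le> loc_norm p1 g k" if k: "k \<in> X" for k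
  proof (rule loc_le)
    show "set_borel_measurable lebesgue (unit_int k) g"
      by (rule set_borel_measurable_subset[OF m]) (use k in \<open>auto simp: unit_int_def amalg_dom_def\<close>)
  qed (use assms k in \<open>auto simp: loc_Lp_def\<close>)
  show ?thesis using r m by (auto simp: loc_Lp_def)
qed

lemma amal_comp_p:
  assumes "g \<in> amalgam X r p1" "0 < p2" "p2 < p1" "0 < r"
  shows "g \<in> amalgam X r p2 \<and> amalgam_norm X r p2 g \<le> amalgam_norm X r p1 g"
proof -
  have L: "loc_Lp X p2 g \<and> (\<forall>k\<in>X. loc_norm p2 g k \<le> loc_norm p1 g k)"
    using loc_Lp_p assms by (auto simp: amalgam_def)
  show ?thesis
    using lr_comp[of X "loc_norm p2 g" "loc_norm p1 g" r] assms L loc_norm_nn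
    by (auto simp: amalgam_def amalgam_norm_def)
qed

lemma theta_factor:
  fixes \<epsilon> q \<theta>1 \<theta>2 :: real
  assumes "\<epsilon> > 0" "\<theta>1 \<le> \<theta>2" "q > 0"
  shows "\<epsilon> powr (\<theta>2 / (q * (1 + \<epsilon>))) \<le> exp ((\<theta>2 - \<theta>1) / q) * \<epsilon> powr (\<theta>1 / (q * (1 + \<epsilon>)))"
proof -
  have "\<epsilon> powr (\<theta>2 / (q * (1 + \<epsilon>))) = \<epsilon> powr ((\<theta>2 - \<theta>1) / (q * (1 + \<epsilon>))) * \<epsilon> powr (\<theta>1 / (q * (1 + \<epsilon>)))"
    by (simp add: diff_divide_distrib flip: powr_add)
  also have "\<dots> \<le> exp ((\<theta>2 - \<theta>1) / q) * \<epsilon> powr (\<theta>1 / (q * (1 + \<epsilon>)))"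
    by (intro mult_right_mono eps_bound) (use assms in auto)
  finally show ?thesis .
qed

lemma a_factor:
  fixes \<epsilon> q1 q2 \<theta> :: real
  assumes e: "\<epsilon> > 0" and q: "1 \<le> q1" "q1 < q2" and th: "\<theta> > 0"
    and eta: "\<eta> = q2 * (1 + \<epsilon>) / q1 - 1"
  shows "\<epsilon> powr (\<theta> / (q2 * (1 + \<epsilon>))) \<le> exp (\<theta> / q2) * \<eta> powr ((q1 / q2 * \<theta>) / (q1 * (1 + \<eta>)))"
proof -
  define s where "s = \<theta> / (q2 * (1 + \<epsilon>))"
  have s0: "s > 0" using assms by (simp add: s_def)
  have qe: "q1 * (1 + \<eta>) = q2 * (1 + \<epsilon>)" using q by (simp add: eta field_simps)
  have ex: "(q1 / q2 * \<theta>) / (q1 * (1 + \<eta>)) = (q1 / q2) * s"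
    unfolding qe s_def by simp
  have ts: "(q1 / q2) * s \<le> s" using q s0 by (simp add: mult_le_cancel_right1 divide_le_eq)
  have ts0: "(q1 / q2) * s \<ge> 0" using q s0 by simp
  have eeta: "\<epsilon> \<le> \<eta>"
  proof -
    have "q1 * (1 + \<epsilon>) \<le> q2 * (1 + \<epsilon>)" using q e by (intro mult_right_mono) auto
    hence "q1 * (1 + \<epsilon>) \<le> q1 * (1 + \<eta>)" using qe by simp
    thus ?thesis using q by simp
  qed
  have ex1: "exp (\<theta> / q2) \<ge> 1" using th q by simp
  show ?thesis unfolding ex s_def[symmetric]
  proof (cases "\<epsilon> \<le> 1")
    case True
    have "\<epsilon> powr s \<le> \<epsilon> powr ((q1 / q2) * s)" by (rule powr_mono') (use ts e True in auto)
    also have "\<dots> \<le> \<eta> powr ((q1 / q2) * s)" by (rule powr_mono2) (use ts0 e eeta in auto)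
    also have "\<dots> \<le> exp (\<theta> / q2) * \<eta> powr ((q1 / q2) * s)"
      using ex1 by (simp add: mult_le_cancel_right1)
    finally show "\<epsilon> powr s \<le> exp (\<theta> / q2) * \<eta> powr ((q1 / q2) * s)" .
  next
    case False
    have "\<epsilon> powr s \<le> exp (\<theta> / q2)" unfolding s_def by (rule eps_bound) (use e th q in auto)
    also have "\<dots> \<le> exp (\<theta> / q2) * \<eta> powr ((q1 / q2) * s)"
      using ge_one_powr_ge_zero[of \<eta> "(q1 / q2) * s"] False eeta ts0 by simp
    finally show "\<epsilon> powr s \<le> exp (\<theta> / q2) * \<eta> powr ((q1 / q2) * s)" .
  qed
qed

lemma from_lr:
  assumes g: "g \<in> amalgam X r p" and r: "0 < r" "r \<le> q" and th: "\<theta> > 0"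
  shows "g \<in> grand_amalgam X q \<theta> p \<and> grand_amalgam_norm X q \<theta> p g \<le> exp (\<theta> / q) * amalgam_norm X r p g"
proof -
  have m: "g \<in> amalgam X (q * (1 + \<epsilon>)) p \<and> amalgam_norm X (q * (1 + \<epsilon>)) p g \<le> amalgam_norm X r p g"
    if "\<epsilon> > 0" for \<epsilon>
    by (rule amal_mono[OF g r(1)]) (use r that in \<open>auto intro: order_trans[of _ q] simp: mult_le_cancel_left1\<close>)
  have st: "bdd_above ((\<lambda>\<epsilon>. \<epsilon> powr (\<theta> / (q * (1 + \<epsilon>))) * amalgam_norm X (q * (1 + \<epsilon>)) p g) ` {0<..}) \<and>
     (SUP \<epsilon>\<in>{0<..}. \<epsilon> powr (\<theta> / (q * (1 + \<epsilon>))) * amalgam_norm X (q * (1 + \<epsilon>)) p g)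
       \<le> exp (\<theta> / q) * (SUP \<epsilon>\<in>({0<..}::real set). amalgam_norm X r p g)"
  proof (rule sup_transfer[where h = "\<lambda>e. e"])
    fix e :: real assume e: "e > 0"
    have "e powr (\<theta> / (q * (1 + e))) * amalgam_norm X (q * (1 + e)) p g
        \<le> exp (\<theta> / q) * amalgam_norm X (q * (1 + e)) p g"
      by (intro mult_right_mono eps_bound amalgam_norm_nn) (use e th r in auto)
    also have "\<dots> \<le> exp (\<theta> / q) * amalgam_norm X r p g"
      using m[OF e] by simp
    finally show "e powr (\<theta> / (q * (1 + e))) * amalgam_norm X (q * (1 + e)) p g
        \<le> exp (\<theta> / q) * amalgam_norm X r p g" .
  qed auto
  show ?thesis using st m g
    by (auto simp: grand_amalgam_def grand_amalgam_norm_def amalgam_def)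
qed



lemma part_a:
  assumes q: "1 \<le> q1" "q1 < q2" and th: "\<theta> > 0"
  shows "embeds (grand_amalgam X q1 (q1 / q2 * \<theta>) p) (grand_amalgam_norm X q1 (q1 / q2 * \<theta>) p)
              (grand_amalgam X q2 \<theta> p) (grand_amalgam_norm X q2 \<theta> p)"
proof -
  define h where "h = (\<lambda>e::real. q2 * (1 + e) / q1 - 1)"
  have h0: "h e > 0" if "e > 0" for e
  proof -
    have "q1 * 1 < q2 * (1 + e)" using q that by (intro mult_strict_mono) auto
    thus ?thesis using q by (simp add: h_def field_simps)
  qed
  have hq: "q1 * (1 + h e) = q2 * (1 + e)" for e using q by (simp add: h_def field_simps)
  have *: "g \<in> grand_amalgam X q2 \<theta> p \<and> grand_amalgam_norm X q2 \<theta> p g \<le> exp (\<theta> / q2) * grand_amalgam_norm X q1 (q1 / q2 * \<theta>) p g"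
    if g: "g \<in> grand_amalgam X q1 (q1 / q2 * \<theta>) p" for g
  proof -
    have mem: "g \<in> amalgam X (q2 * (1 + e)) p" if "e > 0" for e
      using g h0[OF that] unfolding grand_amalgam_def by (auto simp flip: hq)
    have st: "bdd_above ((\<lambda>\<epsilon>. \<epsilon> powr (\<theta> / (q2 * (1 + \<epsilon>))) * amalgam_norm X (q2 * (1 + \<epsilon>)) p g) ` {0<..}) \<and>
     (SUP \<epsilon>\<in>{0<..}. \<epsilon> powr (\<theta> / (q2 * (1 + \<epsilon>))) * amalgam_norm X (q2 * (1 + \<epsilon>)) p g)
       \<le> exp (\<theta> / q2) * (SUP \<epsilon>\<in>{0<..}. \<epsilon> powr ((q1 / q2 * \<theta>) / (q1 * (1 + \<epsilon>))) * amalgam_norm X (q1 * (1 + \<epsilon>)) p g)"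
    proof (rule sup_transfer[where h = h])
      show "bdd_above ((\<lambda>\<epsilon>. \<epsilon> powr ((q1 / q2 * \<theta>) / (q1 * (1 + \<epsilon>))) * amalgam_norm X (q1 * (1 + \<epsilon>)) p g) ` {0<..})"
        using g by (simp add: grand_amalgam_def)
    next
      fix e :: real assume e: "e > 0"
      have "e powr (\<theta> / (q2 * (1 + e))) * amalgam_norm X (q2 * (1 + e)) p g
          \<le> (exp (\<theta> / q2) * h e powr ((q1 / q2 * \<theta>) / (q1 * (1 + h e)))) * amalgam_norm X (q2 * (1 + e)) p g"
        by (intro mult_right_mono a_factor amalgam_norm_nn) (use e q th in \<open>auto simp: h_def\<close>)
      also have "\<dots> = exp (\<theta> / q2) * (h e powr ((q1 / q2 * \<theta>) / (q1 * (1 + h e))) * amalgam_norm X (q1 * (1 + h e)) p g)"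
        by (simp add: hq)
      finally show "e powr (\<theta> / (q2 * (1 + e))) * amalgam_norm X (q2 * (1 + e)) p g
          \<le> exp (\<theta> / q2) * (h e powr ((q1 / q2 * \<theta>) / (q1 * (1 + h e))) * amalgam_norm X (q1 * (1 + h e)) p g)" .
    qed (use h0 in auto)
    show ?thesis using st mem g
      by (auto simp: grand_amalgam_def grand_amalgam_norm_def)
  qed
  show ?thesis unfolding embeds_def using * by (intro conjI exI[of _ "exp (\<theta> / q2)"]) auto
qed

lemma part_c_gen:
  assumes th: "0 < \<theta>1" "\<theta>1 \<le> \<theta>2" and p: "0 < p2" "p2 \<le> p1" and q: "1 \<le> q"
  shows "embeds (grand_amalgam X q \<theta>1 p1) (grand_amalgam_norm X q \<theta>1 p1)
              (grand_amalgam X q \<theta>2 p2) (grand_amalgam_norm X q \<theta>2 p2)"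
proof -
  define C where "C = exp ((\<theta>2 - \<theta>1) / q)"
  have cmp: "g \<in> amalgam X r p2 \<and> amalgam_norm X r p2 g \<le> amalgam_norm X r p1 g"
    if "g \<in> amalgam X r p1" "r > 0" for g r
  proof (cases "p2 = p1")
    case True then show ?thesis using that by simp
  next
    case False then show ?thesis using amal_comp_p[OF that(1) p(1) _ that(2)] p by simp
  qed
  have *: "g \<in> grand_amalgam X q \<theta>2 p2 \<and> grand_amalgam_norm X q \<theta>2 p2 g \<le> C * grand_amalgam_norm X q \<theta>1 p1 g"
    if g: "g \<in> grand_amalgam X q \<theta>1 p1" for g
  proof -
    have mem: "g \<in> amalgam X (q * (1 + e)) p2 \<and> amalgam_norm X (q * (1 + e)) p2 g \<le> amalgam_norm X (q * (1 + e)) p1 g"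
      if "e > 0" for e
      by (rule cmp) (use g that q in \<open>auto simp: grand_amalgam_def\<close>)
    have st: "bdd_above ((\<lambda>\<epsilon>. \<epsilon> powr (\<theta>2 / (q * (1 + \<epsilon>))) * amalgam_norm X (q * (1 + \<epsilon>)) p2 g) ` {0<..}) \<and>
     (SUP \<epsilon>\<in>{0<..}. \<epsilon> powr (\<theta>2 / (q * (1 + \<epsilon>))) * amalgam_norm X (q * (1 + \<epsilon>)) p2 g)
       \<le> C * (SUP \<epsilon>\<in>{0<..}. \<epsilon> powr (\<theta>1 / (q * (1 + \<epsilon>))) * amalgam_norm X (q * (1 + \<epsilon>)) p1 g)"
    proof (rule sup_transfer[where h = "\<lambda>e. e"])
      show "bdd_above ((\<lambda>\<epsilon>. \<epsilon> powr (\<theta>1 / (q * (1 + \<epsilon>))) * amalgam_norm X (q * (1 + \<epsilon>)) p1 g) ` {0<..})"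
        using g by (simp add: grand_amalgam_def)
    next
      fix e :: real assume e: "e > 0"
      have "e powr (\<theta>2 / (q * (1 + e))) * amalgam_norm X (q * (1 + e)) p2 g
          \<le> (C * e powr (\<theta>1 / (q * (1 + e)))) * amalgam_norm X (q * (1 + e)) p2 g"
        unfolding C_def by (intro mult_right_mono theta_factor amalgam_norm_nn) (use e q th in auto)
      also have "\<dots> \<le> (C * e powr (\<theta>1 / (q * (1 + e)))) * amalgam_norm X (q * (1 + e)) p1 g"
        by (intro mult_left_mono) (use mem[OF e] in \<open>auto simp: C_def\<close>)
      finally show "e powr (\<theta>2 / (q * (1 + e))) * amalgam_norm X (q * (1 + e)) p2 g
          \<le> C * (e powr (\<theta>1 / (q * (1 + e))) * amalgam_norm X (q * (1 + e)) p1 g)"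
        by (simp add: mult.assoc)
    qed (auto simp: C_def)
    have lp: "loc_Lp X p2 g"
    proof (cases "p2 = p1")
      case True then show ?thesis using g by (simp add: grand_amalgam_def)
    next
      case False then show ?thesis using loc_Lp_p[of X p1 g p2] g p by (simp add: grand_amalgam_def)
    qed
    show ?thesis using st mem lp
      by (auto simp: grand_amalgam_def grand_amalgam_norm_def)
  qed
  show ?thesis unfolding embeds_def using * by (intro conjI exI[of _ C]) (auto simp: C_def)
qed

lemma part_e2:
  assumes q: "1 \<le> q" and d: "\<delta> > 0" and th: "\<theta> > 0"
  shows "embeds (grand_amalgam X q \<theta> p) (grand_amalgam_norm X q \<theta> p)
              (amalgam X (q * (1 + \<delta>)) p) (amalgam_norm X (q * (1 + \<delta>)) p)"
proof -
  define C where "C = \<delta> powr (- (\<theta> / (q * (1 + \<delta>))))"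
  have C0: "C > 0" using d by (simp add: C_def)
  have *: "g \<in> amalgam X (q * (1 + \<delta>)) p \<and> amalgam_norm X (q * (1 + \<delta>)) p g \<le> C * grand_amalgam_norm X q \<theta> p g"
    if g: "g \<in> grand_amalgam X q \<theta> p" for g
  proof -
    have "\<delta> powr (\<theta> / (q * (1 + \<delta>))) * amalgam_norm X (q * (1 + \<delta>)) p g \<le> grand_amalgam_norm X q \<theta> p g"
      unfolding grand_amalgam_norm_def
      by (rule cSUP_upper[where f = "\<lambda>\<epsilon>. \<epsilon> powr (\<theta> / (q * (1 + \<epsilon>))) * amalgam_norm X (q * (1 + \<epsilon>)) p g"])
         (use g d in \<open>auto simp: grand_amalgam_def\<close>)
    hence "C * (\<delta> powr (\<theta> / (q * (1 + \<delta>))) * amalgam_norm X (q * (1 + \<delta>)) p g) \<le> C * grand_amalgam_norm X q \<theta> p g"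
      using C0 by simp
    moreover have "C * (\<delta> powr (\<theta> / (q * (1 + \<delta>))) * amalgam_norm X (q * (1 + \<delta>)) p g) = amalgam_norm X (q * (1 + \<delta>)) p g"
      using d by (simp add: C_def mult.assoc[symmetric] powr_minus)
    ultimately show ?thesis using g d by (auto simp: grand_amalgam_def)
  qed
  show ?thesis unfolding embeds_def using * C0 by (intro conjI exI[of _ C]) auto
qed

lemma part_lr:
  assumes "0 < r" "r \<le> q" "\<theta> > 0"
  shows "embeds (amalgam X r p) (amalgam_norm X r p) (grand_amalgam X q \<theta> p) (grand_amalgam_norm X q \<theta> p)"
  unfolding embeds_def using from_lr[OF _ assms]
  by (intro conjI exI[of _ "exp (\<theta> / q)"]) auto


theorem theorem2p8:
  fixes X :: "int set" and \<theta> :: real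
  assumes "admissible_index X" and "\<theta> > 0"
  shows
   "(\<forall>q1 q2 p. 1 \<le> q1 \<and> q1 < q2 \<and> 1 \<le> p \<longrightarrow>
       embeds (grand_amalgam X q1 (q1 / q2 * \<theta>) p) (grand_amalgam_norm X q1 (q1 / q2 * \<theta>) p)
              (grand_amalgam X q2 \<theta> p) (grand_amalgam_norm X q2 \<theta> p))
  \<and> (\<forall>\<theta>1 \<theta>2 p q. 0 < \<theta>1 \<and> \<theta>1 \<le> \<theta>2 \<and> 1 \<le> p \<and> 1 \<le> q \<longrightarrow>
       embeds (grand_amalgam X q \<theta>1 p) (grand_amalgam_norm X q \<theta>1 p)
              (grand_amalgam X q \<theta>2 p) (grand_amalgam_norm X q \<theta>2 p))
  \<and> (\<forall>\<theta>1 \<theta>2 p1 p2 q. 0 < \<theta>1 \<and> \<theta>1 \<le> \<theta>2 \<and> 1 \<le> p2 \<and> p2 < p1 \<and> 1 \<le> q \<longrightarrow>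
       embeds (grand_amalgam X q \<theta>1 p1) (grand_amalgam_norm X q \<theta>1 p1)
              (grand_amalgam X q \<theta>2 p2) (grand_amalgam_norm X q \<theta>2 p2))
  \<and> (\<forall>p q. 1 \<le> p \<and> 1 \<le> q \<longrightarrow>
       embeds (amalgam X q p) (amalgam_norm X q p)
              (grand_amalgam X q \<theta> p) (grand_amalgam_norm X q \<theta> p))
  \<and> (\<forall>p q \<delta> \<sigma>. 1 \<le> p \<and> 1 \<le> q \<and> \<delta> > 0 \<and> 0 < \<sigma> \<and> \<sigma> < 1 - 1 / q \<longrightarrow>
       embeds (amalgam X (q * (1 - \<sigma>)) p) (amalgam_norm X (q * (1 - \<sigma>)) p)
              (grand_amalgam X q \<theta> p) (grand_amalgam_norm X q \<theta> p)
     \<and> embeds (grand_amalgam X q \<theta> p) (grand_amalgam_norm X q \<theta> p)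
              (amalgam X (q * (1 + \<delta>)) p) (amalgam_norm X (q * (1 + \<delta>)) p))"
proof (intro conjI allI impI)
  fix q1 q2 p :: real assume "1 \<le> q1 \<and> q1 < q2 \<and> 1 \<le> p"
  thus "embeds (grand_amalgam X q1 (q1 / q2 * \<theta>) p) (grand_amalgam_norm X q1 (q1 / q2 * \<theta>) p)
              (grand_amalgam X q2 \<theta> p) (grand_amalgam_norm X q2 \<theta> p)"
    using part_a assms(2) by blast
next
  fix \<theta>1 \<theta>2 p q :: real assume "0 < \<theta>1 \<and> \<theta>1 \<le> \<theta>2 \<and> 1 \<le> p \<and> 1 \<le> q"
  thus "embeds (grand_amalgam X q \<theta>1 p) (grand_amalgam_norm X q \<theta>1 p)
              (grand_amalgam X q \<theta>2 p) (grand_amalgam_norm X q \<theta>2 p)"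
    using part_c_gen[of \<theta>1 \<theta>2 p p q X] by auto
next
  fix \<theta>1 \<theta>2 p1 p2 q :: real assume "0 < \<theta>1 \<and> \<theta>1 \<le> \<theta>2 \<and> 1 \<le> p2 \<and> p2 < p1 \<and> 1 \<le> q"
  thus "embeds (grand_amalgam X q \<theta>1 p1) (grand_amalgam_norm X q \<theta>1 p1)
              (grand_amalgam X q \<theta>2 p2) (grand_amalgam_norm X q \<theta>2 p2)"
    using part_c_gen[of \<theta>1 \<theta>2 p2 p1 q X] by auto
next
  fix p q :: real assume "1 \<le> p \<and> 1 \<le> q"
  thus "embeds (amalgam X q p) (amalgam_norm X q p)
              (grand_amalgam X q \<theta> p) (grand_amalgam_norm X q \<theta> p)"
    using part_lr[of q q \<theta> X p] assms(2) by auto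
next
  fix p q \<delta> \<sigma> :: real assume h: "1 \<le> p \<and> 1 \<le> q \<and> \<delta> > 0 \<and> 0 < \<sigma> \<and> \<sigma> < 1 - 1 / q"
  have "1 / q > 0" using h by simp
  hence s1: "1 - \<sigma> > 0" using h by linarith
  have "q * (1 - \<sigma>) > 0" using h s1 by simp
  moreover have "q * (1 - \<sigma>) \<le> q" using h by (simp add: mult_le_cancel_left1)
  ultimately show "embeds (amalgam X (q * (1 - \<sigma>)) p) (amalgam_norm X (q * (1 - \<sigma>)) p)
              (grand_amalgam X q \<theta> p) (grand_amalgam_norm X q \<theta> p)"
    using part_lr assms(2) by blast
  show "embeds (grand_amalgam X q \<theta> p) (grand_amalgam_norm X q \<theta> p)
              (amalgam X (q * (1 + \<delta>)) p) (amalgam_norm X (q * (1 + \<delta>)) p)"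
    using part_e2 h assms(2) by blast
qed

end
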